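(* Let $\varepsilon>0$, let $\rho,\gamma$ be density matrices on a finite-dimensional system $A$ and $\rho',\gamma'$ density matrices on a finite-dimensional system $A'$. Then $$D_{\min}^\varepsilon\left(\rho\otimes\rho'\,\big\|\,\gamma\otimes\gamma'\right)\leq D_{\min}^\varepsilon(\rho\|\gamma)+D_{\max}(\rho'\|\gamma').$$
   Context: For density matrices $\rho,\gamma$ on a system $A$, the hypothesis testing divergence is $D_{\min}^\varepsilon(\rho\|\gamma)\coloneqq-\log\min\{\mathrm{Tr}[\gamma\Lambda]\,:\,0\le\Lambda\le I^A,\ \mathrm{Tr}[\Lambda\rho]\ge1-\varepsilon\}$, and the max relative entropy is $D_{\max}(\rho\|\gamma)\coloneqq\log\min\{t\ge0: t\gamma\ge\rho\}$ (equal to $+\infty$ if no such $t$ exists). Logarithms are base 2. *)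

theory Defs
  imports "HOL-Analysis.Analysis"
begin

text \<open>Finite-dimensional quantum systems are modelled by finite index types;
  operators on a system with index type 'n are complex matrices of type
  complex^'n^'n.\<close>

definition mtrace :: "complex^'n^'n \<Rightarrow> complex" where
  "mtrace M = (\<Sum>i\<in>UNIV. M $ i $ i)"

definition adjoint_mat :: "complex^'n^'m \<Rightarrow> complex^'m^'n" where
  "adjoint_mat M = (\<chi> i j. cnj (M $ j $ i))"

definition psd :: "complex^'n^'n \<Rightarrow> bool" where
  "psd M \<longleftrightarrow> adjoint_mat M = M \<and>
     (\<forall>v::complex^'n. (\<Sum>i\<in>UNIV. cnj (v $ i) * (M *v v) $ i) \<in> \<real> \<and>
                      0 \<le> Re (\<Sum>i\<in>UNIV. cnj (v $ i) * (M *v v) $ i))"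

definition loewner_le :: "complex^'n^'n \<Rightarrow> complex^'n^'n \<Rightarrow> bool" where
  "loewner_le A B \<longleftrightarrow> psd (B - A)"

definition density_op :: "complex^'n^'n \<Rightarrow> bool" where
  "density_op \<rho> \<longleftrightarrow> psd \<rho> \<and> mtrace \<rho> = 1"

definition kron :: "complex^'a^'a \<Rightarrow> complex^'b^'b \<Rightarrow> complex^('a \<times> 'b)^('a \<times> 'b)" where
  "kron A B = (\<chi> p q. A $ fst p $ fst q * B $ snd p $ snd q)"

definition log2e :: "real \<Rightarrow> ereal" where
  "log2e x = (if x \<le> 0 then -\<infinity> else ereal (log 2 x))"

text \<open>Hypothesis testing divergence: D_min^eps(rho||gamma) = - log min Tr[gamma Lambda]
  over 0 \<le> Lambda \<le> I with Tr[Lambda rho] \<ge> 1 - eps (the minimum exists by compactness,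
  so it equals the infimum).\<close>
definition D_min :: "real \<Rightarrow> complex^'n^'n \<Rightarrow> complex^'n^'n \<Rightarrow> ereal" where
  "D_min \<epsilon> \<rho> \<gamma> = - log2e (Inf {Re (mtrace (\<gamma> ** \<Lambda>)) | \<Lambda>.
      psd \<Lambda> \<and> loewner_le \<Lambda> (mat 1) \<and> Re (mtrace (\<Lambda> ** \<rho>)) \<ge> 1 - \<epsilon>})"

definition D_max :: "complex^'n^'n \<Rightarrow> complex^'n^'n \<Rightarrow> ereal" where
  "D_max \<rho> \<gamma> = (if \<exists>t\<ge>0. loewner_le \<rho> (t *\<^sub>R \<gamma>)
      then log2e (Inf {t. t \<ge> 0 \<and> loewner_le \<rho> (t *\<^sub>R \<gamma>)})
      else \<infinity>)"

end

theory Submission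
  imports Defs
begin


definition sq :: "complex^'n^'n \<Rightarrow> complex^'n \<Rightarrow> complex^'n \<Rightarrow> complex" where
  "sq M u v = (\<Sum>i\<in>UNIV. \<Sum>j\<in>UNIV. cnj (u$i) * M$i$j * v$j)"

definition herm :: "complex^'n^'n \<Rightarrow> bool" where
  "herm M \<longleftrightarrow> (\<forall>i j. cnj (M$j$i) = M$i$j)"

lemma adjoint_herm: "adjoint_mat M = M \<longleftrightarrow> herm M"
  by (auto simp: adjoint_mat_def herm_def vec_eq_iff)

lemma qf_eq: "(\<Sum>i\<in>UNIV. cnj (v $ i) * (M *v v) $ i) = sq M v v"
  by (simp add: sq_def matrix_vector_mult_def sum_distrib_left mult.assoc)

lemma herm_sq_cnj: "herm M \<Longrightarrow> cnj (sq M u v) = sq M v u"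
proof -
  assume h: "herm M"
  have cM: "cnj (M$i$j) = M$j$i" for i j using h unfolding herm_def by simp
  have "cnj (sq M u v) = (\<Sum>i\<in>UNIV. \<Sum>j\<in>UNIV. u$i * M$j$i * cnj (v$j))"
    unfolding sq_def by (simp add: cM)
  also have "\<dots> = (\<Sum>j\<in>UNIV. \<Sum>i\<in>UNIV. u$i * M$j$i * cnj (v$j))" by (rule sum.swap)
  also have "\<dots> = sq M v u" unfolding sq_def by (simp add: mult_ac)
  finally show ?thesis .
qed

lemma psd_iff: "psd M \<longleftrightarrow> herm M \<and> (\<forall>v. 0 \<le> Re (sq M v v))"
  unfolding psd_def qf_eq adjoint_herm
  using herm_sq_cnj Reals_cnj_iff by metis

lemma psd_herm: "psd M \<Longrightarrow> herm M" by (simp add: psd_iff)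
lemma psd_sq: "psd M \<Longrightarrow> 0 \<le> Re (sq M v v)" by (simp add: psd_iff)

lemma mtrace_mult: "mtrace (A ** B) = (\<Sum>i\<in>UNIV. \<Sum>j\<in>UNIV. A$i$j * B$j$i)"
  by (simp add: mtrace_def matrix_matrix_mult_def)

lemma sq_add: "sq A (v + w) (v + w) = sq A v v + sq A v w + sq A w v + sq A w w"
  by (simp add: sq_def algebra_simps sum.distrib)

lemma sq_expand:
  assumes h: "herm A"
  shows "sq A (v + (\<chi> i. if i = k then c else 0)) (v + (\<chi> i. if i = k then c else 0))
     = sq A v v + cnj c * (A *v v)$k + c * cnj ((A *v v)$k) + cnj c * c * A$k$k"
proof -
  let ?w = "(\<chi> i. if i = k then c else 0) :: complex^'a"
  have 1: "sq A ?w v = cnj c * (A *v v)$k"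
  proof -
    have "\<And>i. (\<Sum>j\<in>UNIV. cnj (?w$i) * A$i$j * v$j) = (if i = k then cnj c * (A *v v)$k else 0)"
      by (auto simp: matrix_vector_mult_def sum_distrib_left mult.assoc)
    then show ?thesis unfolding sq_def by simp
  qed
  have 2: "sq A v ?w = c * cnj ((A *v v)$k)"
    using herm_sq_cnj[OF h, of ?w v] 1 by simp
  have 3: "sq A ?w ?w = cnj c * c * A$k$k"
  proof -
    have "\<And>i. (\<Sum>j\<in>UNIV. cnj (?w$i) * A$i$j * ?w$j) = (if i = k then cnj c * c * A$k$k else 0)"
      by (auto simp: if_distrib cong: if_cong)
    then show ?thesis unfolding sq_def by simp
  qed
  show ?thesis using sq_add[of A v ?w] 1 2 3 by simp
qed

lemma sq_e: "sq A (\<chi> i. if i = k then c else 0) (\<chi> i. if i = k then c else 0) = cnj c * c * A$k$k"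
proof -
  have "\<And>i. (\<Sum>j\<in>UNIV. cnj ((\<chi> i. if i = k then c else 0)$i) * A$i$j * (\<chi> i. if i = k then c else 0)$j) = (if i = k then cnj c * c * A$k$k else 0)"
    by (auto simp: if_distrib cong: if_cong)
  then show ?thesis unfolding sq_def by simp
qed

lemma psd_diag: "psd A \<Longrightarrow> 0 \<le> Re (A$k$k)"
  using psd_sq[of A "\<chi> i. if i = k then 1 else 0"] by (simp add: sq_e)

lemma herm_diag: "herm A \<Longrightarrow> A$k$k = of_real (Re (A$k$k))"
  unfolding herm_def by (metis Reals_cnj_iff complex_is_Real_iff of_real_Re)

lemma cnjz: "Re (cnj z * z) = (cmod z)^2"
  using complex_norm_square[of z] by (metis Re_complex_of_real mult.commute)

lemma K_aux:
  assumes B: "psd B" and fin: "finite S"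
  shows "psd A \<Longrightarrow> (\<forall>i j. A$i$j \<noteq> 0 \<longrightarrow> i \<in> S \<and> j \<in> S) \<Longrightarrow> 0 \<le> Re (mtrace (A ** B))"
  using fin
proof (induction S arbitrary: A rule: finite_induct)
  case empty
  then have "A = 0" by (auto simp: vec_eq_iff)
  then show ?case by (simp add: mtrace_def)
next
  case (insert k S)
  have hA: "herm A" using insert psd_herm by blast
  define d where "d = A$k$k"
  have dR: "d = of_real (Re d)" using herm_diag[OF hA] d_def by simp
  have dnn: "0 \<le> Re d" using psd_diag insert d_def by blast
  show ?case
  proof (cases "Re d = 0")
    case True
    have d0: "A$k$k = 0" using True dR d_def by simp
    have col: "A$k$i = 0" for i
    proof (rule ccontr)
      assume ne: "A$k$i \<noteq> 0"
      let ?v = "(\<chi> j. if j = i then 1 else 0) :: complex^'a"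
      define z where "z = A$k$i"
      define s where "s = (Re (A$i$i) + 1) / (2 * (cmod z)^2)"
      define c where "c = - (of_real s) * z"
      have Av: "(A *v ?v)$k = z" unfolding z_def
        by (simp add: matrix_vector_mult_def if_distrib cong: if_cong)
      have sv: "sq A ?v ?v = A$i$i" using sq_e[of A i 1] by simp
      have zpos: "(cmod z)^2 > 0" using ne z_def by simp
      have "Re (sq A (?v + (\<chi> i. if i = k then c else 0)) (?v + (\<chi> i. if i = k then c else 0)))
          = Re (A$i$i) - 2 * s * (cmod z)^2"
        unfolding sq_expand[OF hA] Av sv d0 c_def
        by (simp add: cnjz[symmetric] algebra_simps)
      also have "\<dots> = -1" using zpos unfolding s_def by (simp add: field_simps)
      finally show False using psd_sq[OF insert.prems(1)] by (metis neg_0_le_iff_le not_one_le_zero)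
    qed
    have row: "A$i$k = 0" for i using hA col unfolding herm_def by (metis complex_cnj_zero)
    have "\<forall>i j. A$i$j \<noteq> 0 \<longrightarrow> i \<in> S \<and> j \<in> S"
      using insert.prems(2) col row by blast
    then show ?thesis using insert.IH insert.prems(1) by blast
  next
    case False
    then have dpos: "Re d > 0" using dnn by simp
    have dnz: "d \<noteq> 0" using dpos by auto
    have cd: "cnj d = d" using dR by (metis complex_cnj_complex_of_real)
    define A' where "A' = (\<chi> i j. A$i$j - A$i$k * A$k$j / d)"
    have hA': "herm A'" using hA cd unfolding herm_def A'_def by (simp add: d_def)
    have sqA': "sq A' v v = sq A (v + (\<chi> i. if i = k then - (A *v v)$k / d else 0)) (v + (\<chi> i. if i = k then - (A *v v)$k / d else 0))" for v
    proof -
      define z where "z = (A *v v)$k"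
      have 1: "(\<Sum>i\<in>UNIV. cnj (v$i) * A$i$k) = cnj z"
        using hA unfolding z_def herm_def matrix_vector_mult_def
        by (simp add: mult.commute)
      have "sq A' v v = sq A v v - (\<Sum>i\<in>UNIV. \<Sum>j\<in>UNIV. cnj (v$i) * A$i$k * (A$k$j * v$j)) / d"
        unfolding A'_def sq_def by (simp add: algebra_simps sum_subtractf sum_divide_distrib)
      also have "(\<Sum>i\<in>UNIV. \<Sum>j\<in>UNIV. cnj (v$i) * A$i$k * (A$k$j * v$j)) = cnj z * z"
      proof -
        have "(\<Sum>i\<in>UNIV. \<Sum>j\<in>UNIV. cnj (v$i) * A$i$k * (A$k$j * v$j)) = (\<Sum>i\<in>UNIV. cnj (v$i) * A$i$k) * (\<Sum>j\<in>UNIV. A$k$j * v$j)"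
          by (simp add: sum_product)
        also have "\<dots> = cnj z * z" unfolding 1 by (simp add: z_def matrix_vector_mult_def)
        finally show ?thesis .
      qed
      finally have eq: "sq A' v v = sq A v v - cnj z * z / d" .
      have cc: "cnj (- z / d) = - cnj z / d" using cd by simp
      show ?thesis unfolding sq_expand[OF hA] z_def[symmetric] d_def[symmetric] eq cc
        using dnz by (simp add: field_simps)
    qed
    have pA': "psd A'" using hA' sqA' psd_sq[OF insert.prems(1)] psd_iff by metis
    have suppA': "\<forall>i j. A'$i$j \<noteq> 0 \<longrightarrow> i \<in> S \<and> j \<in> S"
    proof (intro allI impI)
      fix i j assume ne: "A'$i$j \<noteq> 0"
      have r0: "A'$k$j' = 0" for j' unfolding A'_def using dnz by (simp add: d_def[symmetric])
      have c0: "A'$i'$k = 0" for i' unfolding A'_def using dnz by (simp add: d_def[symmetric])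
      have "i \<noteq> k" "j \<noteq> k" using ne r0 c0 by auto
      moreover have "i \<in> insert k S"
      proof (rule ccontr)
        assume "i \<notin> insert k S"
        then have "A$i$j = 0" "A$i$k = 0" using insert.prems(2) by blast+
        then have "A'$i$j = 0" unfolding A'_def by simp
        then show False using ne by simp
      qed
      moreover have "j \<in> insert k S"
      proof (rule ccontr)
        assume "j \<notin> insert k S"
        then have "A$i$j = 0" "A$k$j = 0" using insert.prems(2) by blast+
        then have "A'$i$j = 0" unfolding A'_def by simp
        then show False using ne by simp
      qed
      ultimately show "i \<in> S \<and> j \<in> S" by auto
    qed
    have IH: "0 \<le> Re (mtrace (A' ** B))" using insert.IH pA' suppA' by blast
    define u where "u = (\<chi> i. A$i$k)"
    have tr: "mtrace (A ** B) = mtrace (A' ** B) + sq B u u / d"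
    proof -
      have "mtrace (A' ** B) = mtrace (A ** B) - (\<Sum>i\<in>UNIV. \<Sum>j\<in>UNIV. A$i$k * A$k$j * B$j$i) / d"
        unfolding mtrace_mult A'_def by (simp add: algebra_simps sum_subtractf sum_divide_distrib)
      moreover have "sq B u u = (\<Sum>i\<in>UNIV. \<Sum>j\<in>UNIV. A$i$k * A$k$j * B$j$i)"
      proof -
        have cA: "cnj (A$i$k) = A$k$i" for i using hA unfolding herm_def by simp
        have "sq B u u = (\<Sum>i\<in>UNIV. \<Sum>j\<in>UNIV. A$k$i * B$i$j * A$j$k)"
          unfolding sq_def u_def by (simp add: cA)
        also have "\<dots> = (\<Sum>j\<in>UNIV. \<Sum>i\<in>UNIV. A$k$i * B$i$j * A$j$k)" by (rule sum.swap)
        also have "\<dots> = (\<Sum>i\<in>UNIV. \<Sum>j\<in>UNIV. A$i$k * A$k$j * B$j$i)" by (simp add: mult_ac)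
        finally show ?thesis .
      qed
      ultimately show ?thesis by simp
    qed
    have "Re (sq B u u / d) = Re (sq B u u) / Re d"
    proof -
      have "Re (sq B u u / of_real (Re d)) = Re (sq B u u) / Re d" by (rule Re_divide_of_real)
      then show ?thesis using dR by simp
    qed
    moreover have "0 \<le> Re (sq B u u) / Re d" using psd_sq[OF B] dpos by simp
    ultimately show ?thesis using IH tr by simp
  qed
qed

lemma K: "psd A \<Longrightarrow> psd B \<Longrightarrow> 0 \<le> Re (mtrace (A ** B))"
  using K_aux[of B UNIV A] by simp



lemma sum_pair: "(\<Sum>p\<in>(UNIV::('a::finite \<times> 'b::finite) set). f p) = (\<Sum>a\<in>UNIV. \<Sum>b\<in>UNIV. f (a,b))"
  by (simp add: UNIV_Times_UNIV[symmetric] sum.cartesian_product del: UNIV_Times_UNIV)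

lemma sum4_swap: "(\<Sum>a\<in>A. \<Sum>b\<in>B. \<Sum>c\<in>C. \<Sum>d\<in>D. f a b c d) = (\<Sum>b\<in>B. \<Sum>d\<in>D. \<Sum>a\<in>A. \<Sum>c\<in>C. f a b c d)"
proof -
  have "(\<Sum>a\<in>A. \<Sum>b\<in>B. \<Sum>c\<in>C. \<Sum>d\<in>D. f a b c d) = (\<Sum>b\<in>B. \<Sum>a\<in>A. \<Sum>c\<in>C. \<Sum>d\<in>D. f a b c d)"
    by (rule sum.swap)
  also have "\<dots> = (\<Sum>b\<in>B. \<Sum>a\<in>A. \<Sum>d\<in>D. \<Sum>c\<in>C. f a b c d)"
    by (rule sum.cong[OF refl], rule sum.cong[OF refl], rule sum.swap)
  also have "\<dots> = (\<Sum>b\<in>B. \<Sum>d\<in>D. \<Sum>a\<in>A. \<Sum>c\<in>C. f a b c d)"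
    by (rule sum.cong[OF refl], rule sum.swap)
  finally show ?thesis .
qed

lemma sum4_swap2: "(\<Sum>a\<in>A. \<Sum>b\<in>B. \<Sum>c\<in>C. \<Sum>d\<in>D. f a b c d) = (\<Sum>c\<in>C. \<Sum>d\<in>D. \<Sum>a\<in>A. \<Sum>b\<in>B. f a b c d)"
proof -
  have "(\<Sum>a\<in>A. \<Sum>b\<in>B. \<Sum>c\<in>C. \<Sum>d\<in>D. f a b c d) = (\<Sum>a\<in>A. \<Sum>c\<in>C. \<Sum>b\<in>B. \<Sum>d\<in>D. f a b c d)"
    by (rule sum.cong[OF refl], rule sum.swap)
  also have "\<dots> = (\<Sum>c\<in>C. \<Sum>a\<in>A. \<Sum>b\<in>B. \<Sum>d\<in>D. f a b c d)"
    by (rule sum.swap)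
  also have "\<dots> = (\<Sum>c\<in>C. \<Sum>a\<in>A. \<Sum>d\<in>D. \<Sum>b\<in>B. f a b c d)"
    by (rule sum.cong[OF refl], rule sum.cong[OF refl], rule sum.swap)
  also have "\<dots> = (\<Sum>c\<in>C. \<Sum>d\<in>D. \<Sum>a\<in>A. \<Sum>b\<in>B. f a b c d)"
    by (rule sum.cong[OF refl], rule sum.swap)
  finally show ?thesis .
qed

lemma gram_psd:
  assumes X: "psd X"
  shows "psd (\<chi> b b'. sq X (w b) (w b'))"
proof -
  have h: "herm X" using X psd_herm by blast
  have "herm (\<chi> b b'. sq X (w b) (w b'))"
    unfolding herm_def using herm_sq_cnj[OF h] by simp
  moreover have "sq (\<chi> b b'. sq X (w b) (w b')) u u = sq X (\<Sum>b\<in>UNIV. u$b *s w b) (\<Sum>b\<in>UNIV. u$b *s w b)" for u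
  proof -
    have "sq (\<chi> b b'. sq X (w b) (w b')) u u = (\<Sum>b\<in>UNIV. \<Sum>b'\<in>UNIV. \<Sum>i\<in>UNIV. \<Sum>j\<in>UNIV.
        cnj (u$b) * cnj (w b $ i) * X$i$j * (u$b' * w b' $ j))"
      unfolding sq_def by (simp add: sum_distrib_left sum_distrib_right mult_ac)
    also have "\<dots> = (\<Sum>i\<in>UNIV. \<Sum>j\<in>UNIV. \<Sum>b\<in>UNIV. \<Sum>b'\<in>UNIV.
        cnj (u$b) * cnj (w b $ i) * X$i$j * (u$b' * w b' $ j))"
      by (rule sum4_swap2)
    also have "\<dots> = sq X (\<Sum>b\<in>UNIV. u$b *s w b) (\<Sum>b\<in>UNIV. u$b *s w b)"
      unfolding sq_def by (simp add: sum_distrib_left sum_distrib_right mult_ac)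
    finally show ?thesis .
  qed
  ultimately show ?thesis unfolding psd_iff using psd_sq[OF X] by simp
qed

lemma transp_psd:
  assumes G: "psd G"
  shows "psd (\<chi> i j. G$j$i)"
proof -
  have "herm (\<chi> i j. G$j$i)" using psd_herm[OF G] unfolding herm_def by simp
  moreover have "sq (\<chi> i j. G$j$i) v v = sq G (\<chi> i. cnj (v$i)) (\<chi> i. cnj (v$i))" for v
  proof -
    have "sq (\<chi> i j. G$j$i) v v = (\<Sum>j\<in>UNIV. \<Sum>i\<in>UNIV. v$i * G$i$j * cnj (v$j))"
      unfolding sq_def by (simp add: mult_ac)
    also have "\<dots> = (\<Sum>i\<in>UNIV. \<Sum>j\<in>UNIV. v$i * G$i$j * cnj (v$j))" by (rule sum.swap)
    also have "\<dots> = sq G (\<chi> i. cnj (v$i)) (\<chi> i. cnj (v$i))" unfolding sq_def by simp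
    finally show ?thesis .
  qed
  ultimately show ?thesis unfolding psd_iff using psd_sq[OF G] by simp
qed

lemma kron_psd:
  assumes X: "psd X" and Y: "psd Y"
  shows "psd (kron X Y)"
proof -
  have "herm (kron X Y)" using psd_herm[OF X] psd_herm[OF Y] unfolding herm_def kron_def by simp
  moreover have "0 \<le> Re (sq (kron X Y) w w)" for w
  proof -
    define G where "G = (\<chi> b b'. sq X (\<chi> a. w$(a,b)) (\<chi> a. w$(a,b')))"
    have "sq (kron X Y) w w = (\<Sum>a\<in>UNIV. \<Sum>b\<in>UNIV. \<Sum>a'\<in>UNIV. \<Sum>b'\<in>UNIV.
         cnj (w$(a,b)) * X$a$a' * Y$b$b' * w$(a',b'))"
      unfolding sq_def kron_def by (simp add: sum_pair mult.assoc)
    also have "\<dots> = (\<Sum>b\<in>UNIV. \<Sum>b'\<in>UNIV. \<Sum>a\<in>UNIV. \<Sum>a'\<in>UNIV.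
         cnj (w$(a,b)) * X$a$a' * Y$b$b' * w$(a',b'))"
      by (rule sum4_swap)
    also have "\<dots> = mtrace (Y ** (\<chi> i j. G$j$i))"
      unfolding mtrace_mult G_def sq_def
      by (simp add: sum_distrib_left mult_ac)
    finally show ?thesis using K[OF Y transp_psd[OF gram_psd[OF X]]] G_def by simp
  qed
  ultimately show ?thesis unfolding psd_iff by blast
qed

definition ptr :: "complex^'b^'b \<Rightarrow> complex^('a \<times> 'b)^('a \<times> 'b) \<Rightarrow> complex^'a^'a" where
  "ptr R L = (\<chi> a a'. \<Sum>b\<in>UNIV. \<Sum>b'\<in>UNIV. R$b'$b * L$(a,b)$(a',b'))"

lemma ptr_psd:
  fixes R :: "complex^'b::finite^'b" and L :: "complex^('a::finite \<times> 'b)^('a \<times> 'b)"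
  assumes R: "psd R" and L: "psd L"
  shows "psd (ptr R L)"
proof -
  have hR: "herm R" and hL: "herm L" using R L psd_herm by blast+
  have "herm (ptr R L)" unfolding herm_def ptr_def
  proof (intro allI)
    fix i j :: 'a
    have "cnj ((\<chi> a a'. \<Sum>b\<in>UNIV. \<Sum>b'\<in>UNIV. R$b'$b * L$(a,b)$(a',b')) $ j $ i)
       = (\<Sum>b\<in>UNIV. \<Sum>b'\<in>UNIV. R$b$b' * L$(i,b')$(j,b))"
    proof -
      have cR: "cnj (R$x$y) = R$y$x" for x y using hR unfolding herm_def by simp
      have cL: "cnj (L$x$y) = L$y$x" for x y using hL unfolding herm_def by blast
      show ?thesis by (simp add: cR cL)
    qed
    also have "\<dots> = (\<chi> a a'. \<Sum>b\<in>UNIV. \<Sum>b'\<in>UNIV. R$b'$b * L$(a,b)$(a',b')) $ i $ j"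
      by (simp, rule sum.swap)
    finally show "cnj ((\<chi> a a'. \<Sum>b\<in>UNIV. \<Sum>b'\<in>UNIV. R$b'$b * L$(a,b)$(a',b')) $ j $ i) =
      (\<chi> a a'. \<Sum>b\<in>UNIV. \<Sum>b'\<in>UNIV. R$b'$b * L$(a,b)$(a',b')) $ i $ j" .
  qed
  moreover have "0 \<le> Re (sq (ptr R L) v v)" for v
  proof -
    define ww :: "'b \<Rightarrow> complex^('a \<times> 'b)" where "ww b = (\<chi> p. if snd p = b then v$(fst p) else 0)" for b
    define G where "G = (\<chi> b b'. sq L (ww b) (ww b'))"
    have Gb: "G$b$b' = (\<Sum>a\<in>UNIV. \<Sum>a'\<in>UNIV. cnj (v$a) * L$(a,b)$(a',b') * v$a')" for b b'
    proof -
      have "G$b$b' = (\<Sum>a\<in>UNIV. \<Sum>c\<in>UNIV. \<Sum>a'\<in>UNIV. \<Sum>c'\<in>UNIV.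
           cnj ((ww b)$(a,c)) * L$(a,c)$(a',c') * (ww b')$(a',c'))"
        unfolding G_def sq_def by (simp add: sum_pair)
      also have "\<dots> = (\<Sum>a\<in>UNIV. \<Sum>a'\<in>UNIV. cnj (v$a) * L$(a,b)$(a',b') * v$a')"
      proof (rule sum.cong[OF refl])
        fix a
        have in1: "(\<Sum>c'\<in>UNIV. X c' * (ww b')$(a',c')) = X b' * v$a'" for X a'
        proof -
          have "(\<Sum>c'\<in>UNIV. X c' * (ww b')$(a',c')) = (\<Sum>c'\<in>UNIV. if c' = b' then X b' * v$a' else 0)"
            unfolding ww_def by (rule sum.cong) auto
          then show ?thesis by simp
        qed
        have "(\<Sum>c\<in>UNIV. \<Sum>a'\<in>UNIV. \<Sum>c'\<in>UNIV. cnj ((ww b)$(a,c)) * L$(a,c)$(a',c') * (ww b')$(a',c'))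
            = (\<Sum>c\<in>UNIV. if c = b then (\<Sum>a'\<in>UNIV. cnj (v$a) * L$(a,b)$(a',b') * v$a') else 0)"
          unfolding in1 by (rule sum.cong) (auto simp: ww_def)
        then show "(\<Sum>c\<in>UNIV. \<Sum>a'\<in>UNIV. \<Sum>c'\<in>UNIV. cnj ((ww b)$(a,c)) * L$(a,c)$(a',c') * (ww b')$(a',c'))
            = (\<Sum>a'\<in>UNIV. cnj (v$a) * L$(a,b)$(a',b') * v$a')" by simp
      qed
      finally show ?thesis .
    qed
    have "sq (ptr R L) v v = (\<Sum>a\<in>UNIV. \<Sum>a'\<in>UNIV. \<Sum>b\<in>UNIV. \<Sum>b'\<in>UNIV.
         R$b'$b * (cnj (v$a) * L$(a,b)$(a',b') * v$a'))"
      unfolding sq_def ptr_def by (simp add: sum_distrib_left sum_distrib_right mult_ac)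
    also have "\<dots> = (\<Sum>b\<in>UNIV. \<Sum>b'\<in>UNIV. \<Sum>a\<in>UNIV. \<Sum>a'\<in>UNIV.
         R$b'$b * (cnj (v$a) * L$(a,b)$(a',b') * v$a'))"
      by (rule sum4_swap2)
    also have "\<dots> = (\<Sum>b\<in>UNIV. \<Sum>b'\<in>UNIV. R$b'$b * G$b$b')" by (simp add: Gb sum_distrib_left)
    also have "\<dots> = mtrace (R ** G)" unfolding mtrace_mult by (rule sum.swap)
    finally show ?thesis using K[OF R gram_psd[OF L]] G_def by simp
  qed
  ultimately show ?thesis unfolding psd_iff by blast
qed



lemma sum_delta_mult: "(\<Sum>y\<in>(UNIV::'n::finite set). f y * (if x = y then 1 else 0)) = (f x :: 'c::comm_ring_1)"
proof -
  have "\<And>y. f y * (if x = y then 1 else 0) = (if x = y then f x else 0)" by auto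
  then show ?thesis by simp
qed

lemma ptr_id:
  fixes R :: "complex^'b::finite^'b"
  shows "mtrace R = 1 \<Longrightarrow> ptr R (mat 1 :: complex^('a::finite \<times> 'b)^('a \<times> 'b)) = mat 1"
proof -
  assume tr: "mtrace R = 1"
  have "(\<Sum>b\<in>UNIV. \<Sum>b'\<in>UNIV. R$b'$b * (mat 1 :: complex^('a \<times> 'b)^('a \<times> 'b))$(a,b)$(a',b'))
        = (if a = a' then 1 else 0)" for a a' :: 'a
  proof -
    have "(\<Sum>b\<in>UNIV. \<Sum>b'\<in>UNIV. R$b'$b * (mat 1 :: complex^('a \<times> 'b)^('a \<times> 'b))$(a,b)$(a',b'))
        = (\<Sum>b\<in>UNIV. if a = a' then R$b$b else 0)"
      by (rule sum.cong[OF refl]) (auto simp: mat_def sum_delta_mult)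
    also have "\<dots> = (if a = a' then 1 else 0)" using tr by (simp add: mtrace_def)
    finally show ?thesis .
  qed
  then show ?thesis unfolding ptr_def by (simp add: vec_eq_iff mat_def)
qed

lemma ptr_diff: "ptr R (A - B) = ptr R A - ptr R B"
  unfolding ptr_def by (simp add: vec_eq_iff algebra_simps sum_subtractf)

lemma tr_ptr1: "mtrace (ptr R L ** \<rho>) = mtrace (L ** kron \<rho> R)"
proof -
  have "mtrace (ptr R L ** \<rho>) = (\<Sum>a\<in>UNIV. \<Sum>a'\<in>UNIV. \<Sum>b\<in>UNIV. \<Sum>b'\<in>UNIV. L$(a,b)$(a',b') * (\<rho>$a'$a * R$b'$b))"
    unfolding mtrace_mult ptr_def by (simp add: sum_distrib_right sum_distrib_left mult_ac)
  also have "\<dots> = (\<Sum>a\<in>UNIV. \<Sum>b\<in>UNIV. \<Sum>a'\<in>UNIV. \<Sum>b'\<in>UNIV. L$(a,b)$(a',b') * (\<rho>$a'$a * R$b'$b))"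
    by (rule sum.cong[OF refl], rule sum.swap)
  also have "\<dots> = mtrace (L ** kron \<rho> R)"
    unfolding mtrace_mult kron_def by (simp add: sum_pair)
  finally show ?thesis .
qed

lemma tr_ptr2: "mtrace (\<gamma> ** ptr R L) = mtrace (kron \<gamma> R ** L)"
proof -
  have "mtrace (\<gamma> ** ptr R L) = (\<Sum>a\<in>UNIV. \<Sum>a'\<in>UNIV. \<Sum>b\<in>UNIV. \<Sum>b'\<in>UNIV. \<gamma>$a$a' * R$b'$b * L$(a',b)$(a,b'))"
    unfolding mtrace_mult ptr_def by (simp add: sum_distrib_right sum_distrib_left mult_ac)
  also have "\<dots> = (\<Sum>a\<in>UNIV. \<Sum>a'\<in>UNIV. \<Sum>b'\<in>UNIV. \<Sum>b\<in>UNIV. \<gamma>$a$a' * R$b'$b * L$(a',b)$(a,b'))"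
    by (rule sum.cong[OF refl], rule sum.cong[OF refl], rule sum.swap)
  also have "\<dots> = (\<Sum>a\<in>UNIV. \<Sum>b'\<in>UNIV. \<Sum>a'\<in>UNIV. \<Sum>b\<in>UNIV. \<gamma>$a$a' * R$b'$b * L$(a',b)$(a,b'))"
    by (rule sum.cong[OF refl], rule sum.swap)
  also have "\<dots> = mtrace (kron \<gamma> R ** L)"
    unfolding mtrace_mult kron_def by (simp add: sum_pair)
  finally show ?thesis .
qed

lemma tr_kron: "mtrace (kron X Y) = mtrace X * mtrace Y"
  unfolding mtrace_def kron_def by (simp add: sum_pair sum_product)

lemma psd_id: "psd (mat 1)"
proof -
  have "herm (mat 1)" unfolding herm_def by (simp add: mat_def)
  moreover have "0 \<le> Re (sq (mat 1) v v)" for v :: "complex^'n"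
  proof -
    have "sq (mat 1) v v = (\<Sum>i\<in>UNIV. cnj (v$i) * v$i)"
    proof -
      have "\<And>i j. cnj (v$i) * (mat 1::complex^'n^'n)$i$j * v$j = (if i = j then cnj (v$i) * v$i else 0)"
        by (auto simp: mat_def)
      then show ?thesis unfolding sq_def by simp
    qed
    then show ?thesis by (simp add: cnjz sum_nonneg)
  qed
  ultimately show ?thesis unfolding psd_iff by blast
qed

lemma psd_trace: "psd M \<Longrightarrow> 0 \<le> Re (mtrace M)"
  using K[OF _ psd_id, of M] by simp

lemma scaleR_entry: "((t::real) *\<^sub>R X)$i$j = of_real t * (X$i$j :: complex)"
  by (simp del: scaleR_conv_of_real) (rule scaleR_conv_of_real)

lemma tr_lin: "mtrace ((t *\<^sub>R X - Y) ** L) = of_real t * mtrace (X ** L) - mtrace (Y ** L)"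
  unfolding mtrace_mult by (simp add: scaleR_entry left_diff_distrib sum_subtractf sum_distrib_left mult.assoc) (simp add: scaleR_conv_of_real)

lemma kron_lin: "kron G (t *\<^sub>R X - Y) = t *\<^sub>R kron G X - kron G Y"
  unfolding kron_def by (simp add: vec_eq_iff scaleR_entry right_diff_distrib mult_ac)



lemma psd_zero: "psd (0::complex^'n^'n)"
  unfolding psd_iff herm_def sq_def by simp

lemma log2e_not_inf: "log2e x \<noteq> \<infinity>"
  unfolding log2e_def by simp

lemma neg_log2e_plus_inf: "- log2e x + \<infinity> = \<infinity>"
  unfolding log2e_def by simp

lemma neg_log2e_nonpos: "x \<le> 0 \<Longrightarrow> - log2e x = \<infinity>"
  unfolding log2e_def by simp

theorem lemma3:
  fixes \<epsilon> :: real
    and \<rho> \<gamma> :: "complex^'a::finite^'a"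
    and \<rho>' \<gamma>' :: "complex^'b::finite^'b"
  assumes "\<epsilon> > 0"
    and "density_op \<rho>" and "density_op \<gamma>"
    and "density_op \<rho>'" and "density_op \<gamma>'"
  shows "D_min \<epsilon> (kron \<rho> \<rho>') (kron \<gamma> \<gamma>') \<le> D_min \<epsilon> \<rho> \<gamma> + D_max \<rho>' \<gamma>'"
proof -
  have pr: "psd \<rho>" and tr: "mtrace \<rho> = 1" using assms(2) density_op_def by auto
  have pg: "psd \<gamma>" and tg: "mtrace \<gamma> = 1" using assms(3) density_op_def by auto
  have pr': "psd \<rho>'" and tr': "mtrace \<rho>' = 1" using assms(4) density_op_def by auto
  have pg': "psd \<gamma>'" and tg': "mtrace \<gamma>' = 1" using assms(5) density_op_def by auto
  define SA where "SA = {Re (mtrace (\<gamma> ** \<Lambda>)) | \<Lambda>.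
      psd \<Lambda> \<and> loewner_le \<Lambda> (mat 1) \<and> Re (mtrace (\<Lambda> ** \<rho>)) \<ge> 1 - \<epsilon>}"
  define SB where "SB = {Re (mtrace (kron \<gamma> \<gamma>' ** \<Lambda>)) | \<Lambda>.
      psd \<Lambda> \<and> loewner_le \<Lambda> (mat 1) \<and> Re (mtrace (\<Lambda> ** kron \<rho> \<rho>')) \<ge> 1 - \<epsilon>}"
  define mA where "mA = Inf SA"
  define mB where "mB = Inf SB"
  have DA: "D_min \<epsilon> \<rho> \<gamma> = - log2e mA" unfolding D_min_def mA_def SA_def by simp
  have DB: "D_min \<epsilon> (kron \<rho> \<rho>') (kron \<gamma> \<gamma>') = - log2e mB" unfolding D_min_def mB_def SB_def by simp
  have SBne: "SB \<noteq> {}"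
  proof -
    have "Re (mtrace (mat 1 ** kron \<rho> \<rho>')) = 1" by (simp add: tr_kron tr tr')
    then have "Re (mtrace (kron \<gamma> \<gamma>' ** mat 1)) \<in> SB"
      unfolding SB_def loewner_le_def using psd_id psd_zero assms(1)
      by (intro CollectI exI[of _ "mat 1"]) simp
    then show ?thesis by blast
  qed
  have SAbdd: "bdd_below SA"
  proof (rule bdd_belowI[of _ 0])
    fix x assume "x \<in> SA"
    then show "0 \<le> x" unfolding SA_def using K[OF pg] by blast
  qed
  show ?thesis
  proof (cases "\<exists>t\<ge>0. loewner_le \<rho>' (t *\<^sub>R \<gamma>')")
    case False
    then have "D_max \<rho>' \<gamma>' = \<infinity>" unfolding D_max_def by auto
    then show ?thesis unfolding DA DB by (simp add: neg_log2e_plus_inf)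
  next
    case True
    define Tset where "Tset = {t. t \<ge> 0 \<and> loewner_le \<rho>' (t *\<^sub>R \<gamma>')}"
    define T where "T = Inf Tset"
    have DM: "D_max \<rho>' \<gamma>' = log2e T" unfolding D_max_def T_def Tset_def using True by simp
    have Tne: "Tset \<noteq> {}" using True Tset_def by auto
    have t1: "t \<ge> 1" if "t \<in> Tset" for t
    proof -
      have "psd (t *\<^sub>R \<gamma>' - \<rho>')" using that unfolding Tset_def loewner_le_def by simp
      then have "0 \<le> Re (mtrace ((t *\<^sub>R \<gamma>' - \<rho>') ** mat 1))" using K psd_id by blast
      also have "mtrace ((t *\<^sub>R \<gamma>' - \<rho>') ** mat 1) = of_real t - 1"
        unfolding tr_lin by (simp add: tg' tr')
      finally show ?thesis by simp
    qed
    have T1: "T \<ge> 1" unfolding T_def using Tne t1 by (intro cInf_greatest) auto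
    show ?thesis
    proof (cases "mA \<le> 0")
      case True
      then show ?thesis unfolding DA DB DM using T1 by (simp add: neg_log2e_nonpos log2e_def)
    next
      case False
      then have mApos: "mA > 0" by simp
      have key: "mA / t \<le> x" if t: "t \<in> Tset" and x: "x \<in> SB" for t x
      proof -
        obtain \<Lambda> where xL: "x = Re (mtrace (kron \<gamma> \<gamma>' ** \<Lambda>))" and pL: "psd \<Lambda>"
          and lL: "loewner_le \<Lambda> (mat 1)" and fL: "Re (mtrace (\<Lambda> ** kron \<rho> \<rho>')) \<ge> 1 - \<epsilon>"
          using x unfolding SB_def by blast
        have "Re (mtrace (\<gamma> ** ptr \<rho>' \<Lambda>)) \<in> SA"
        proof -
          have "psd (ptr \<rho>' \<Lambda>)" using ptr_psd[OF pr' pL] .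
          moreover have "loewner_le (ptr \<rho>' \<Lambda>) (mat 1)"
          proof -
            have "psd (ptr \<rho>' (mat 1 - \<Lambda>))" using ptr_psd[OF pr'] lL unfolding loewner_le_def by blast
            then show ?thesis unfolding loewner_le_def ptr_diff ptr_id[OF tr'] .
          qed
          moreover have "Re (mtrace (ptr \<rho>' \<Lambda> ** \<rho>)) \<ge> 1 - \<epsilon>" unfolding tr_ptr1 using fL .
          ultimately show ?thesis unfolding SA_def by blast
        qed
        then have A1: "mA \<le> Re (mtrace (kron \<gamma> \<rho>' ** \<Lambda>))"
          unfolding mA_def tr_ptr2[symmetric] using SAbdd by (simp add: cInf_lower)
        have tpos: "t > 0" using t1[OF t] by simp
        have "psd (t *\<^sub>R \<gamma>' - \<rho>')" using t unfolding Tset_def loewner_le_def by simp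
        then have "0 \<le> Re (mtrace (kron \<gamma> (t *\<^sub>R \<gamma>' - \<rho>') ** \<Lambda>))"
          using K kron_psd pg pL by blast
        also have "\<dots> = t * x - Re (mtrace (kron \<gamma> \<rho>' ** \<Lambda>))"
          unfolding kron_lin tr_lin xL by simp
        finally have "mA \<le> t * x" using A1 by simp
        then show ?thesis using tpos by (simp add: divide_le_eq mult.commute)
      qed
      obtain t0 where t0: "t0 \<in> Tset" using Tne by blast
      have mB1: "mA / t \<le> mB" if "t \<in> Tset" for t
        unfolding mB_def using SBne key[OF that] by (intro cInf_greatest) auto
      have mBpos: "mB > 0"
        using mB1[OF t0] mApos t1[OF t0] by (smt (verit) divide_pos_pos)
      have "mA / mB \<le> T" unfolding T_def
      proof (rule cInf_greatest[OF Tne])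
        fix t assume "t \<in> Tset"
        then have "mA / t \<le> mB" "t > 0" using mB1 t1 by force+
        then show "mA / mB \<le> t" using mBpos by (simp add: field_simps)
      qed
      then have "mA / T \<le> mB" using mBpos T1 by (simp add: field_simps)
      moreover have "mA / T > 0" using mApos T1 by simp
      ultimately have "log 2 (mA / T) \<le> log 2 mB" using log_mono[of 2 "mA / T" mB] by simp
      then have "log 2 mA - log 2 T \<le> log 2 mB" using mApos T1 by (simp add: log_divide)
      then show ?thesis unfolding DA DB DM using mApos mBpos T1 by (simp add: log2e_def)
    qed
  qed
qed


end
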